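(* In the setting described in the context, for a given $x\in\mathcal X$, $\max_{u\in\mathcal U(x)}\min\{c_2y: y\in\mathcal Y(x,u)\}=\max_{u\in\mathcal U^*(x)\cup\mathcal V^*(x)}\min\{c_2y: y\in\mathcal Y(x,u)\}$, where $\mathcal U^*(x)=\bigcup_{\pi\in\mathcal P_\Pi}\mathcal{OU}(x,\pi)$ and $\mathcal V^*(x)=\bigcup_{\gamma\in\mathcal R_\Pi}\mathcal{OU}(x,\gamma)$.
   Context: $\mathcal X=\{x\in\mathbb Z^{m_x}_+\times\mathbb R^{n_x}_+: Ax\ge b\}$, $\mathcal U(x)=\{u\in\mathbb R^{n_u}_+: F(x)u\le h+Gx\}$ with $F(x)$ a matrix depending on $x$, $\mathcal Y(x,u)=\{y\in\mathbb R^{n_y}_+: B_2y\ge d-B_1x-Eu\}$. $\Pi=\{\pi\ge 0: B_2^\intercal\pi\le c_2^\intercal\}$, with finite sets of extreme points $\mathcal P_\Pi$ and extreme rays $\mathcal R_\Pi$. For a vector $\beta$, $\mathcal{OU}(x,\beta)$ denotes the set of optimal solutions of the linear program $\max\{(-Eu)^\intercal\beta: u\in\mathcal U(x)\}$. The optimal value of an infeasible minimization (maximization) problem is $+\infty$ ($-\infty$). Standing assumptions: (A1) $\mathcal U(x)\ne\emptyset$ for all $x\in\mathcal X$; (A2) $\mathcal U(x)$ is bounded for all $x\in\mathcal X$; (A3) $\min\{c_1x+c_2y: x\in\mathcal X,u\in\mathcal U(x),y\in\mathcal Y(x,u)\}$ has a finite optimal value. *)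

theory Defs
  imports "HOL-Analysis.Analysis"
begin

definition nonneg :: "real ^ 'n \<Rightarrow> bool" where
  "nonneg v \<longleftrightarrow> (\<forall>i. 0 \<le> v $ i)"

definition vle :: "real ^ 'n \<Rightarrow> real ^ 'n \<Rightarrow> bool" where
  "vle v w \<longleftrightarrow> (\<forall>i. v $ i \<le> w $ i)"

definition Xset :: "'nx set \<Rightarrow> real ^ 'nx ^ 'p \<Rightarrow> real ^ 'p \<Rightarrow> (real ^ 'nx) set" where
  "Xset Iz A b = {x. nonneg x \<and> (\<forall>i\<in>Iz. x $ i \<in> \<int>) \<and> vle b (A *v x)}"

definition Uset :: "(real ^ 'nx \<Rightarrow> real ^ 'nu ^ 'k) \<Rightarrow> real ^ 'k \<Rightarrow> real ^ 'nx ^ 'k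
                   \<Rightarrow> real ^ 'nx \<Rightarrow> (real ^ 'nu) set" where
  "Uset F h G x = {u. nonneg u \<and> vle (F x *v u) (h + G *v x)}"

definition Yset :: "real ^ 'ny ^ 'm \<Rightarrow> real ^ 'm \<Rightarrow> real ^ 'nx ^ 'm \<Rightarrow> real ^ 'nu ^ 'm
                   \<Rightarrow> real ^ 'nx \<Rightarrow> real ^ 'nu \<Rightarrow> (real ^ 'ny) set" where
  "Yset B2 d B1 E x u = {y. nonneg y \<and> vle (d - B1 *v x - E *v u) (B2 *v y)}"

definition PiSet :: "real ^ 'ny ^ 'm \<Rightarrow> real ^ 'ny \<Rightarrow> (real ^ 'm) set" where
  "PiSet B2 c2 = {\<pi>. nonneg \<pi> \<and> vle (transpose B2 *v \<pi>) c2}"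

definition extreme_points :: "(real ^ 'm) set \<Rightarrow> (real ^ 'm) set" where
  "extreme_points S = {p. p extreme_point_of S}"

text \<open>Recession cone of Pi, and its extreme rays (all nonzero vectors spanning an
  extreme ray of the cone; the paper's finite set R_Pi picks one representative per ray).\<close>
definition recession_cone_Pi :: "real ^ 'ny ^ 'm \<Rightarrow> (real ^ 'm) set" where
  "recession_cone_Pi B2 = {\<gamma>. nonneg \<gamma> \<and> vle (transpose B2 *v \<gamma>) 0}"

definition extreme_rays :: "real ^ 'ny ^ 'm \<Rightarrow> (real ^ 'm) set" where
  "extreme_rays B2 = {\<gamma>. \<gamma> \<in> recession_cone_Pi B2 \<and> \<gamma> \<noteq> 0 \<and>
     (\<forall>a\<in>recession_cone_Pi B2. \<forall>b\<in>recession_cone_Pi B2.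
        \<gamma> = a + b \<longrightarrow> (\<exists>s\<ge>0. a = s *\<^sub>R \<gamma>) \<and> (\<exists>t\<ge>0. b = t *\<^sub>R \<gamma>))}"

definition OU :: "(real ^ 'nx \<Rightarrow> real ^ 'nu ^ 'k) \<Rightarrow> real ^ 'k \<Rightarrow> real ^ 'nx ^ 'k
                 \<Rightarrow> real ^ 'nu ^ 'm \<Rightarrow> real ^ 'nx \<Rightarrow> real ^ 'm \<Rightarrow> (real ^ 'nu) set" where
  "OU F h G E x \<beta> = {u. u \<in> Uset F h G x \<and>
      (\<forall>v\<in>Uset F h G x. (- (E *v v)) \<bullet> \<beta> \<le> (- (E *v u)) \<bullet> \<beta>)}"

text \<open>Second-stage value min{c2 y : y in Y(x,u)} in the extended reals
  (+infinity if infeasible, -infinity if unbounded).\<close>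
definition Qval :: "real ^ 'ny \<Rightarrow> real ^ 'ny ^ 'm \<Rightarrow> real ^ 'm \<Rightarrow> real ^ 'nx ^ 'm
                   \<Rightarrow> real ^ 'nu ^ 'm \<Rightarrow> real ^ 'nx \<Rightarrow> real ^ 'nu \<Rightarrow> ereal" where
  "Qval c2 B2 d B1 E x u = (INF y\<in>Yset B2 d B1 E x u. ereal (c2 \<bullet> y))"

end

theory Submission
  imports Defs
begin


lemma inner_mono_nonneg:
  fixes p a b :: "real^'n"
  assumes "nonneg p" "vle a b" shows "p \<bullet> a \<le> p \<bullet> b"
  using assms unfolding inner_vec_def nonneg_def vle_def
  by (intro sum_mono) (simp add: mult_left_mono)

lemma inner_transpose: "(\<pi>::real^'m) \<bullet> (B *v y) = (transpose B *v \<pi>) \<bullet> y"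
  by (simp add: transpose_matrix_vector dot_lmul_matrix)

lemma weak_duality:
  assumes "\<pi> \<in> PiSet B2 c2" "nonneg y" "vle w (B2 *v y)"
  shows "\<pi> \<bullet> w \<le> c2 \<bullet> y"
proof -
  have "\<pi> \<bullet> w \<le> \<pi> \<bullet> (B2 *v y)" using assms by (intro inner_mono_nonneg) (auto simp: PiSet_def)
  also have "\<dots> = y \<bullet> (transpose B2 *v \<pi>)" by (simp add: inner_transpose inner_commute)
  also have "\<dots> \<le> y \<bullet> c2" using assms by (intro inner_mono_nonneg) (auto simp: PiSet_def)
  finally show ?thesis by (simp add: inner_commute)
qed

lemma ray_weak:
  assumes "\<gamma> \<in> recession_cone_Pi B2" "nonneg y" "vle w (B2 *v y)"
  shows "\<gamma> \<bullet> w \<le> 0"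
proof -
  have "\<gamma> \<bullet> w \<le> \<gamma> \<bullet> (B2 *v y)" using assms by (intro inner_mono_nonneg) (auto simp: recession_cone_Pi_def)
  also have "\<dots> = y \<bullet> (transpose B2 *v \<gamma>)" by (simp add: inner_transpose inner_commute)
  also have "\<dots> \<le> y \<bullet> 0" using assms by (intro inner_mono_nonneg) (auto simp: recession_cone_Pi_def)
  finally show ?thesis by simp
qed

lemma farkas_cone:
  fixes G :: "'a::euclidean_space set"
  assumes "finite G" "b \<notin> convex_cone hull G"
  shows "\<exists>a. a \<bullet> b < 0 \<and> (\<forall>g\<in>G. 0 \<le> a \<bullet> g)"
proof -
  obtain a c where ab: "a \<bullet> b < c" and ac: "\<forall>x\<in>convex_cone hull G. c < a \<bullet> x"
    using separating_hyperplane_closed_point[OF convex_convex_cone_hull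
        closed_convex_cone_hull[OF assms(1)] assms(2)] by blast
  have c0: "c < 0" using ac convex_cone_hull_contains_0 by force
  have "0 \<le> a \<bullet> g" if g: "g \<in> G" for g
  proof (rule ccontr)
    assume "\<not> 0 \<le> a \<bullet> g"
    hence neg: "a \<bullet> g < 0" by simp
    define t where "t = c / (a \<bullet> g)"
    have t0: "0 \<le> t" using neg c0 by (simp add: t_def divide_nonpos_neg less_imp_le)
    have "t *\<^sub>R g \<in> convex_cone hull G"
      by (rule convex_cone_hull_mul[OF hull_inc[OF g] t0])
    hence "c < a \<bullet> (t *\<^sub>R g)" using ac by blast
    also have "a \<bullet> (t *\<^sub>R g) = c" using neg by (simp add: t_def)
    finally show False by simp
  qed
  thus ?thesis using ab c0 by (intro exI[of _ a]) auto
qed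




lemma farkas_row:
  fixes M :: "real^'m^'n" and b :: "real^'n" and a :: "real^'m" and \<beta> :: real
  assumes nf: "\<not> (\<exists>\<pi>. nonneg \<pi> \<and> vle (M *v \<pi>) b \<and> a \<bullet> \<pi> \<le> \<beta>)"
  shows "\<exists>z t. nonneg z \<and> 0 \<le> t \<and> (\<forall>j. 0 \<le> (transpose M *v z) $ j + t * a $ j)
              \<and> z \<bullet> b + t * \<beta> < 0"
proof -
  define K :: "((real^'n) \<times> real) set" where
    "K = {p. \<exists>\<pi> s \<sigma>. nonneg \<pi> \<and> nonneg s \<and> 0 \<le> \<sigma> \<and> p = (M *v \<pi> + s, a \<bullet> \<pi> + \<sigma>)}"
  define G :: "((real^'n) \<times> real) set" where
    "G = range (\<lambda>j. (column j M, a $ j)) \<union> range (\<lambda>i. (axis i 1, 0)) \<union> {(0, 1)}"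
  have finG: "finite G" unfolding G_def by simp
  have ccK: "convex_cone K"
    unfolding convex_cone_def
  proof (intro conjI)
    have "(0::(real^'n) \<times> real) \<in> K" unfolding K_def
      by (intro CollectI exI[of _ "0::real^'m"] exI[of _ "0::real^'n"] exI[of _ "0::real"])
         (auto simp: nonneg_def zero_prod_def)
    then show "K \<noteq> {}" by blast
    show "convex K" unfolding convex_def
    proof (intro ballI allI impI)
      fix p q :: "(real^'n) \<times> real" and u v :: real
      assume "p \<in> K" "q \<in> K" and uv: "0 \<le> u" "0 \<le> v" "u + v = 1"
      then obtain \<pi>1 s1 \<sigma>1 \<pi>2 s2 \<sigma>2 where
        h1: "nonneg \<pi>1" "nonneg s1" "0 \<le> \<sigma>1" "p = (M *v \<pi>1 + s1, a \<bullet> \<pi>1 + \<sigma>1)" and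
        h2: "nonneg \<pi>2" "nonneg s2" "0 \<le> \<sigma>2" "q = (M *v \<pi>2 + s2, a \<bullet> \<pi>2 + \<sigma>2)"
        unfolding K_def by blast
      show "u *\<^sub>R p + v *\<^sub>R q \<in> K" unfolding K_def
        apply (rule CollectI)
        apply (rule exI[of _ "u *\<^sub>R \<pi>1 + v *\<^sub>R \<pi>2"])
        apply (rule exI[of _ "u *\<^sub>R s1 + v *\<^sub>R s2"])
        apply (rule exI[of _ "u * \<sigma>1 + v * \<sigma>2"])
        using h1 h2 uv
        by (auto simp: nonneg_def matrix_vector_right_distrib matrix_vector_mult_scaleR
            inner_add_right algebra_simps)
    qed
    show "conic K" unfolding conic_def
    proof (intro allI impI)
      fix p :: "(real^'n) \<times> real" and c :: real
      assume "p \<in> K" "0 \<le> c"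
      then obtain \<pi>1 s1 \<sigma>1 where
        h1: "nonneg \<pi>1" "nonneg s1" "0 \<le> \<sigma>1" "p = (M *v \<pi>1 + s1, a \<bullet> \<pi>1 + \<sigma>1)"
        unfolding K_def by blast
      show "c *\<^sub>R p \<in> K" unfolding K_def
        apply (rule CollectI)
        apply (rule exI[of _ "c *\<^sub>R \<pi>1"])
        apply (rule exI[of _ "c *\<^sub>R s1"])
        apply (rule exI[of _ "c * \<sigma>1"])
        using h1 \<open>0 \<le> c\<close>
        by (auto simp: nonneg_def matrix_vector_right_distrib matrix_vector_mult_scaleR
            algebra_simps)
    qed
  qed
  have GK: "G \<subseteq> K"
  proof
    fix g assume "g \<in> G"
    then consider (c) j where "g = (column j M, a $ j)" | (e) i where "g = (axis i 1, 0)"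
      | (o) "g = (0, 1)" unfolding G_def by blast
    then show "g \<in> K"
    proof cases
      case c
      have "M *v axis j 1 = column j M"
        by (simp add: vec_eq_iff matrix_vector_mult_def column_def axis_def if_distrib cong: if_cong)
      moreover have "a \<bullet> axis j 1 = a $ j" by (simp add: inner_axis)
      ultimately show ?thesis unfolding K_def using c
        by (intro CollectI exI[of _ "axis j 1"] exI[of _ "0::real^'n"] exI[of _ "0::real"])
           (auto simp: nonneg_def axis_def)
    next
      case e
      then show ?thesis unfolding K_def
        by (intro CollectI exI[of _ "0::real^'m"] exI[of _ "axis i 1"] exI[of _ "0::real"])
           (auto simp: nonneg_def axis_def)
    next
      case o
      then show ?thesis unfolding K_def
        by (intro CollectI exI[of _ "0::real^'m"] exI[of _ "0::real^'n"] exI[of _ "1::real"])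
           (auto simp: nonneg_def zero_prod_def)
    qed
  qed
  have hK: "convex_cone hull G \<subseteq> K"
    using GK ccK by (rule hull_minimal)
  have "(b, \<beta>) \<notin> K"
  proof
    assume "(b, \<beta>) \<in> K"
    then obtain \<pi> s \<sigma> where h: "nonneg \<pi>" "nonneg s" "0 \<le> \<sigma>" "b = M *v \<pi> + s" "\<beta> = a \<bullet> \<pi> + \<sigma>"
      unfolding K_def by blast
    then have "vle (M *v \<pi>) b" "a \<bullet> \<pi> \<le> \<beta>" by (auto simp: vle_def nonneg_def)
    with h nf show False by blast
  qed
  with hK have "(b, \<beta>) \<notin> convex_cone hull G" by blast
  then obtain q where q: "q \<bullet> (b, \<beta>) < 0" "\<forall>g\<in>G. 0 \<le> q \<bullet> g"
    using farkas_cone[OF finG] by blast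
  obtain z t where qzt: "q = (z, t)" by (cases q)
  have 1: "0 \<le> z \<bullet> column j M + t * a $ j" for j
  proof -
    have "(column j M, a $ j) \<in> G" unfolding G_def by blast
    then show ?thesis using q(2) qzt by (force simp: inner_Pair)
  qed
  have 2: "0 \<le> z $ i" for i
  proof -
    have "(axis i 1, 0) \<in> G" unfolding G_def by blast
    then show ?thesis using q(2) qzt by (force simp: inner_Pair inner_axis)
  qed
  have 3: "0 \<le> t"
    using q(2) qzt unfolding G_def by (auto simp: inner_Pair)
  have 4: "z \<bullet> b + t * \<beta> < 0" using q(1) qzt by (simp add: inner_Pair)
  have tr: "(z v* M) $ j = z \<bullet> column j M" for j
    by (simp add: vector_matrix_mult_def inner_vec_def column_def mult.commute)
  show ?thesis
    apply (rule exI[of _ z], rule exI[of _ t]) using 1 2 3 4 by (simp add: tr nonneg_def)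
qed




lemma vm_component: "((z::real^'m) v* M) $ j = z \<bullet> column j M"
  by (simp add: vector_matrix_mult_def inner_vec_def column_def mult.commute)

lemma polyhedron_PiSet: "polyhedron (PiSet (B2::real^'ny^'m) c2)"
proof -
  have eq: "PiSet B2 c2 = (\<Inter>i. {\<pi>. (- axis i 1) \<bullet> \<pi> \<le> 0}) \<inter> (\<Inter>j. {\<pi>. column j B2 \<bullet> \<pi> \<le> c2 $ j})"
    by (auto simp: PiSet_def nonneg_def vle_def vm_component inner_axis inner_commute)
  show ?thesis unfolding eq
    by (intro polyhedron_Int polyhedron_Inter) (auto intro: polyhedron_halfspace_le polyhedron_halfspace_ge)
qed

lemma polyhedron_rec: "polyhedron (recession_cone_Pi (B2::real^'ny^'m))"
proof -
  have eq: "recession_cone_Pi B2 = (\<Inter>i. {\<pi>. (- axis i 1) \<bullet> \<pi> \<le> 0}) \<inter> (\<Inter>j. {\<pi>. column j B2 \<bullet> \<pi> \<le> 0})"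
    by (auto simp: recession_cone_Pi_def nonneg_def vle_def vm_component inner_axis inner_commute)
  show ?thesis unfolding eq
    by (intro polyhedron_Int polyhedron_Inter) (auto intro: polyhedron_halfspace_le polyhedron_halfspace_ge)
qed

lemma one_inner: "((\<chi> i. 1) :: real^'n) \<bullet> (x::real^'n) = (\<Sum>i\<in>UNIV. x $ i)"
  by (simp add: inner_vec_def)

lemma norm_le_one_inner:
  assumes "nonneg (x::real^'n)" shows "norm x \<le> ((\<chi> i. 1) :: real^'n) \<bullet> x"
proof -
  have "norm x \<le> (\<Sum>i\<in>UNIV. \<bar>x $ i\<bar>)" by (rule norm_le_l1_cart)
  also have "\<dots> = (\<Sum>i\<in>UNIV. x $ i)" using assms by (simp add: nonneg_def)
  finally show ?thesis by (simp add: one_inner)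
qed

lemma extreme_exists_orthant:
  fixes S :: "(real^'n) set"
  assumes cl: "closed S" and cv: "convex S" and ne: "S \<noteq> {}" and nn: "\<forall>x\<in>S. nonneg x"
  obtains p where "p extreme_point_of S"
proof -
  define one where "one = ((\<chi> i. 1) :: real^'n)"
  obtain x0 where x0: "x0 \<in> S" using ne by blast
  define S2 where "S2 = S \<inter> {x. one \<bullet> x \<le> one \<bullet> x0}"
  have bS2: "bounded S2" unfolding bounded_iff
  proof (intro exI ballI)
    fix x assume "x \<in> S2"
    then have "x \<in> S" "one \<bullet> x \<le> one \<bullet> x0" by (auto simp: S2_def)
    then show "norm x \<le> one \<bullet> x0" using nn norm_le_one_inner[of x] unfolding one_def by force
  qed
  have cS2: "compact S2" unfolding compact_eq_bounded_closed
    using bS2 cl by (auto simp: S2_def intro: closed_Int closed_halfspace_le)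
  have "S2 \<noteq> {}" using x0 by (auto simp: S2_def)
  then obtain xm where xm: "xm \<in> S2" "\<forall>y\<in>S2. one \<bullet> xm \<le> one \<bullet> y"
    using continuous_attains_inf[OF cS2 _ continuous_on_inner[OF continuous_on_const continuous_on_id], of one] by auto
  define m where "m = one \<bullet> xm"
  have mx0: "m \<le> one \<bullet> x0" using xm by (auto simp: m_def S2_def)
  have hm: "\<And>y. y \<in> S \<Longrightarrow> one \<bullet> y \<ge> m"
  proof -
    fix y assume y: "y \<in> S"
    show "one \<bullet> y \<ge> m"
    proof (cases "one \<bullet> y \<le> one \<bullet> x0")
      case True then have "y \<in> S2" using y by (simp add: S2_def)
      then show ?thesis using xm m_def by auto
    qed (use mx0 in auto)
  qed
  define F where "F = S \<inter> {x. one \<bullet> x = m}"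
  have face: "F face_of S" unfolding F_def
    by (rule face_of_Int_supporting_hyperplane_ge[OF cv hm])
  have "F = S2 \<inter> {x. one \<bullet> x = m}" using mx0 by (auto simp: F_def S2_def)
  then have cF: "compact F" using cS2 by (simp add: closed_hyperplane compact_Int_closed)
  have cvF: "convex F" unfolding F_def by (intro convex_Int cv convex_hyperplane)
  have "F \<noteq> {}" using xm by (auto simp: F_def m_def S2_def)
  then obtain p where "p extreme_point_of F" using extreme_point_exists_convex[OF cF cvF] by blast
  then have "p extreme_point_of S" using extreme_point_of_face[OF face] by blast
  then show ?thesis by (rule that)
qed




lemma infeasible_ray:
  fixes B2 :: "real^'ny^'m" and w :: "real^'m"
  assumes "\<not> (\<exists>y. nonneg y \<and> vle w (B2 *v y))"
  shows "\<exists>\<gamma>\<in>recession_cone_Pi B2. 0 < \<gamma> \<bullet> w"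
proof -
  have "\<not> (\<exists>y. nonneg y \<and> vle ((- B2) *v y) (- w) \<and> (0::real^'ny) \<bullet> y \<le> 0)"
  proof
    assume "\<exists>y. nonneg y \<and> vle ((- B2) *v y) (- w) \<and> (0::real^'ny) \<bullet> y \<le> 0"
    then obtain y where "nonneg y" "vle ((- B2) *v y) (- w)" by blast
    moreover have "(- B2) *v y = - (B2 *v y)" by (simp add: matrix_vector_mult_def vec_eq_iff sum_negf)
    ultimately show False using assms by (auto simp: vle_def)
  qed
  then obtain z t where zt: "nonneg z" "0 \<le> t" "\<forall>j. 0 \<le> (transpose (- B2) *v z) $ j + t * (0::real^'ny) $ j"
      "z \<bullet> (- w) + t * 0 < 0"
    using farkas_row[of "- B2" "- w" "0::real^'ny" 0] by blast
  have "z \<in> recession_cone_Pi B2"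
    using zt(1,3) by (auto simp: recession_cone_Pi_def vle_def vm_component column_def inner_vec_def sum_negf)
  moreover have "0 < z \<bullet> w" using zt(4) by simp
  ultimately show ?thesis by blast
qed

lemma conic_rec: "a \<in> recession_cone_Pi B2 \<Longrightarrow> 0 \<le> c \<Longrightarrow> c *\<^sub>R a \<in> recession_cone_Pi B2"
  by (auto simp: recession_cone_Pi_def nonneg_def vle_def vector_scaleR_matrix_ac scaleR_vector_matrix_assoc
      mult_nonneg_nonpos)

lemma extreme_ray_exists:
  fixes B2 :: "real^'ny^'m" and w :: "real^'m"
  assumes g0: "\<gamma>0 \<in> recession_cone_Pi B2" and pos: "0 < \<gamma>0 \<bullet> w"
  shows "\<exists>\<gamma>\<in>extreme_rays B2. 0 < \<gamma> \<bullet> w"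
proof -
  define one where "one = ((\<chi> i. 1) :: real^'m)"
  define C where "C = recession_cone_Pi B2"
  have nnC: "\<And>x. x \<in> C \<Longrightarrow> nonneg x" by (auto simp: C_def recession_cone_Pi_def)
  have sum_nn: "\<And>x. x \<in> C \<Longrightarrow> 0 \<le> one \<bullet> x"
    using nnC by (auto simp: one_def one_inner nonneg_def intro: sum_nonneg)
  have zero_sum: "x = 0" if "x \<in> C" "one \<bullet> x = 0" for x
  proof -
    have "\<forall>i\<in>UNIV. x $ i = 0" using that nnC[OF that(1)]
      by (subst sum_nonneg_eq_0_iff[symmetric]) (auto simp: one_def one_inner nonneg_def)
    then show ?thesis by (simp add: vec_eq_iff)
  qed
  have clC: "closed C" "convex C" using polyhedron_rec[of B2]
    by (auto simp: C_def polyhedron_imp_closed polyhedron_imp_convex)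
  define C1 where "C1 = C \<inter> {x. one \<bullet> x = 1}"
  have cC1: "compact C1" unfolding compact_eq_bounded_closed
  proof
    show "bounded C1" unfolding bounded_iff
      using nnC norm_le_one_inner unfolding C1_def one_def by fastforce
    show "closed C1" unfolding C1_def using clC by (intro closed_Int closed_hyperplane)
  qed
  have cvC1: "convex C1" unfolding C1_def using clC by (intro convex_Int convex_hyperplane)
  have "\<gamma>0 \<noteq> 0" using pos by auto
  then have s0: "0 < one \<bullet> \<gamma>0" using zero_sum[of \<gamma>0] sum_nn[of \<gamma>0] g0 unfolding C_def by force
  define g1 where "g1 = (1 / (one \<bullet> \<gamma>0)) *\<^sub>R \<gamma>0"
  have g1C1: "g1 \<in> C1" using s0 g0 conic_rec[of \<gamma>0 B2 "1 / (one \<bullet> \<gamma>0)"]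
    by (auto simp: C1_def C_def g1_def)
  have g1w: "0 < w \<bullet> g1" using s0 pos by (simp add: g1_def inner_commute)
  obtain gm where gm: "gm \<in> C1" "\<forall>y\<in>C1. w \<bullet> y \<le> w \<bullet> gm"
    using continuous_attains_sup[OF cC1 _ continuous_on_inner[OF continuous_on_const continuous_on_id], of w]
      g1C1 by auto
  define mx where "mx = w \<bullet> gm"
  have mxpos: "0 < mx" using gm g1C1 g1w by (auto simp: mx_def intro: less_le_trans)
  define F where "F = C1 \<inter> {x. w \<bullet> x = mx}"
  have face: "F face_of C1" unfolding F_def
    by (rule face_of_Int_supporting_hyperplane_le[OF cvC1]) (use gm mx_def in auto)
  have cF: "compact F" unfolding F_def using cC1 by (simp add: closed_hyperplane compact_Int_closed)
  have cvF: "convex F" unfolding F_def by (intro convex_Int cvC1 convex_hyperplane)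
  have "F \<noteq> {}" using gm by (auto simp: F_def mx_def)
  then obtain e where "e extreme_point_of F" using extreme_point_exists_convex[OF cF cvF] by blast
  then have eC1: "e extreme_point_of C1" and eF: "e \<in> F" using extreme_point_of_face[OF face] by blast+
  have ew: "0 < e \<bullet> w" using eF mxpos by (auto simp: F_def inner_commute)
  have eC: "e \<in> C" and e1: "one \<bullet> e = 1" using eF by (auto simp: F_def C1_def)
  have "e \<in> extreme_rays B2"
    unfolding extreme_rays_def
  proof (intro CollectI conjI)
    show "e \<in> recession_cone_Pi B2" using eC by (simp add: C_def)
    show "e \<noteq> 0" using e1 by auto
    show "\<forall>a\<in>recession_cone_Pi B2. \<forall>b\<in>recession_cone_Pi B2.
        e = a + b \<longrightarrow> (\<exists>s\<ge>0. a = s *\<^sub>R e) \<and> (\<exists>t\<ge>0. b = t *\<^sub>R e)"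
    proof (intro ballI impI)
    fix a b assume aC: "a \<in> recession_cone_Pi B2" and bC: "b \<in> recession_cone_Pi B2" and eab: "e = a + b"
    have aC': "a \<in> C" and bC': "b \<in> C" using aC bC by (auto simp: C_def)
    define sa where "sa = one \<bullet> a"
    define sb where "sb = one \<bullet> b"
    have sa0: "0 \<le> sa" and sb0: "0 \<le> sb" using sum_nn aC' bC' by (auto simp: sa_def sb_def)
    have sab: "sa + sb = 1" using e1 eab by (simp add: sa_def sb_def inner_add_right)
    show "(\<exists>s\<ge>0. a = s *\<^sub>R e) \<and> (\<exists>t\<ge>0. b = t *\<^sub>R e)"
    proof (cases "sa = 0")
      case True
      then have "a = 0" using zero_sum[OF aC'] by (simp add: sa_def)
      then show ?thesis using eab by (intro conjI exI[of _ 0] exI[of _ 1]) auto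
    next
      case sa_nz: False
      show ?thesis
      proof (cases "sb = 0")
        case True
        then have "b = 0" using zero_sum[OF bC'] by (simp add: sb_def)
        then show ?thesis using eab by (intro conjI exI[of _ 0] exI[of _ 1]) auto
      next
        case sb_nz: False
        have sap: "0 < sa" "0 < sb" using sa_nz sb_nz sa0 sb0 by auto
        define a' where "a' = (1 / sa) *\<^sub>R a"
        define b' where "b' = (1 / sb) *\<^sub>R b"
        have a'C1: "a' \<in> C1" using conic_rec[of a B2 "1/sa"] aC sap
          by (auto simp: C1_def C_def a'_def sa_def)
        have b'C1: "b' \<in> C1" using conic_rec[of b B2 "1/sb"] bC sap
          by (auto simp: C1_def C_def b'_def sb_def)
        have aa: "a = sa *\<^sub>R a'" and bb: "b = sb *\<^sub>R b'" using sap by (auto simp: a'_def b'_def)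
        have ecomb: "e = (1 - sb) *\<^sub>R a' + sb *\<^sub>R b'" using eab aa bb sab
          by (metis add_diff_cancel_right')
        show ?thesis
        proof (cases "a' = b'")
          case True
          then have "e = a'" using ecomb by (simp add: algebra_simps flip: scaleR_add_left)
          then show ?thesis using aa bb True sa0 sb0 by blast
        next
          case False
          have "sb < 1" using sab sap by auto
          then have "e \<in> open_segment a' b'" using False ecomb sap by (auto simp: in_segment)
          then show ?thesis using eC1 a'C1 b'C1 by (auto simp: extreme_point_of_def)
        qed
      qed
    qed
    qed
  qed
  then show ?thesis using ew by blast
qed




lemma strong_dual:
  fixes B2 :: "real^'ny^'m" and w :: "real^'m" and c2 :: "real^'ny"
  assumes p0: "\<pi>0 \<in> PiSet B2 c2" and y0: "nonneg y0" "vle w (B2 *v y0)"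
  shows "\<exists>p. p extreme_point_of (PiSet B2 c2) \<and>
    (INF y\<in>{y. nonneg y \<and> vle w (B2 *v y)}. ereal (c2 \<bullet> y)) = ereal (p \<bullet> w)"
proof -
  define Y where "Y = {y. nonneg y \<and> vle w (B2 *v y)}"
  define Qe where "Qe = (INF y\<in>Y. ereal (c2 \<bullet> y))"
  define P where "P = PiSet B2 c2"
  have lowP: "ereal (\<pi> \<bullet> w) \<le> Qe" if "\<pi> \<in> P" for \<pi>
    unfolding Qe_def
    by (rule INF_greatest) (use weak_duality that in \<open>auto simp: Y_def P_def\<close>)
  have y0Y: "y0 \<in> Y" using y0 by (simp add: Y_def)
  have up: "Qe \<le> ereal (c2 \<bullet> y0)" unfolding Qe_def by (rule INF_lower[OF y0Y])
  obtain v where v: "Qe = ereal v"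
    using lowP[of \<pi>0] up p0 unfolding P_def by (cases Qe) auto
  have hv: "v \<le> c2 \<bullet> y" if "y \<in> Y" for y
  proof -
    have "Qe \<le> ereal (c2 \<bullet> y)" unfolding Qe_def by (rule INF_lower[OF that])
    then show ?thesis using v by simp
  qed
  have hpi: "\<pi> \<bullet> w \<le> v" if "\<pi> \<in> P" for \<pi> using lowP[OF that] v by simp
  have "\<exists>\<pi>. nonneg \<pi> \<and> vle (transpose B2 *v \<pi>) c2 \<and> (- w) \<bullet> \<pi> \<le> - v"
  proof (rule ccontr)
    assume nf: "\<not> ?thesis"
    obtain z t where zt: "nonneg z" "0 \<le> t"
      "\<forall>j. 0 \<le> (transpose (transpose B2) *v z) $ j + t * (- w) $ j"
      "z \<bullet> c2 + t * (- v) < 0"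
      using farkas_row[OF nf] by blast
    have Bz: "t * w $ j \<le> (B2 *v z) $ j" for j using zt(3) by (simp add: transpose_transpose)
    show False
    proof (cases "t = 0")
      case False
      then have tp: "0 < t" using zt(2) by simp
      define y where "y = (1 / t) *\<^sub>R z"
      have "y \<in> Y" unfolding Y_def
      proof (intro CollectI conjI)
        show "nonneg y" using zt(1) tp by (auto simp: y_def nonneg_def)
        show "vle w (B2 *v y)" unfolding vle_def
        proof
          fix j
          have "t * w $ j \<le> (B2 *v z) $ j" by (rule Bz)
          then have "w $ j \<le> (B2 *v z) $ j / t" using tp by (simp add: field_simps)
          then show "w $ j \<le> (B2 *v y) $ j" by (simp add: y_def matrix_vector_mult_scaleR)
        qed
      qed
      then have "v \<le> c2 \<bullet> y" by (rule hv)
      moreover have "c2 \<bullet> y = (z \<bullet> c2) / t" by (simp add: y_def inner_commute)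
      moreover have "z \<bullet> c2 < t * v" using zt(4) by simp
      ultimately show False using tp by (simp add: field_simps)
    next
      case True
      have zc: "z \<bullet> c2 < 0" using zt(4) True by simp
      have Bz0: "0 \<le> (B2 *v z) $ j" for j using Bz[of j] True by simp
      define s where "s = (c2 \<bullet> y0 - \<pi>0 \<bullet> w + 1) / (- (z \<bullet> c2))"
      have wd0: "\<pi>0 \<bullet> w \<le> c2 \<bullet> y0" using weak_duality[OF p0 y0] .
      have s0: "0 \<le> s" using zc wd0 unfolding s_def by (intro divide_nonneg_pos) auto
      define y where "y = y0 + s *\<^sub>R z"
      have "y \<in> Y" unfolding Y_def
      proof (intro CollectI conjI)
        show "nonneg y" using zt(1) y0(1) s0 by (auto simp: y_def nonneg_def)
        show "vle w (B2 *v y)" unfolding vle_def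
        proof
          fix j
          have "w $ j \<le> (B2 *v y0) $ j" using y0(2) by (simp add: vle_def)
          also have "\<dots> \<le> (B2 *v y0) $ j + s * (B2 *v z) $ j" using s0 Bz0[of j] by simp
          finally show "w $ j \<le> (B2 *v y) $ j"
            by (simp add: y_def matrix_vector_right_distrib matrix_vector_mult_scaleR)
        qed
      qed
      then have "\<pi>0 \<bullet> w \<le> c2 \<bullet> y" using weak_duality[OF p0] by (auto simp: Y_def)
      moreover have "c2 \<bullet> y = c2 \<bullet> y0 + s * (z \<bullet> c2)" by (simp add: y_def inner_add_right inner_commute)
      moreover have "s * (z \<bullet> c2) = - (c2 \<bullet> y0 - \<pi>0 \<bullet> w + 1)" using zc by (simp add: s_def)
      ultimately show False by simp
    qed
  qed
  then obtain \<pi>1 where pi1: "\<pi>1 \<in> P" "v \<le> w \<bullet> \<pi>1"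
    by (auto simp: P_def PiSet_def inner_commute)
  define F where "F = P \<inter> {x. w \<bullet> x = v}"
  have polyP: "polyhedron P" unfolding P_def by (rule polyhedron_PiSet)
  have face: "F face_of P" unfolding F_def
    by (rule face_of_Int_supporting_hyperplane_le[OF polyhedron_imp_convex[OF polyP]])
       (use hpi in \<open>auto simp: inner_commute\<close>)
  have "F \<noteq> {}" using pi1 hpi[OF pi1(1)] by (auto simp: F_def inner_commute)
  moreover have "closed F" unfolding F_def
    by (intro closed_Int polyhedron_imp_closed[OF polyP] closed_hyperplane)
  moreover have "convex F" unfolding F_def
    by (intro convex_Int polyhedron_imp_convex[OF polyP] convex_hyperplane)
  moreover have "\<forall>x\<in>F. nonneg x" by (auto simp: F_def P_def PiSet_def)
  ultimately obtain p where "p extreme_point_of F" using extreme_exists_orthant by metis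
  then have pe: "p extreme_point_of P" and pF: "p \<in> F" using extreme_point_of_face[OF face] by blast+
  have "Qe = ereal (p \<bullet> w)" using pF v by (auto simp: F_def inner_commute)
  then show ?thesis using pe unfolding Qe_def Y_def P_def by blast
qed




lemma Ev_inner: "(E *v u) \<bullet> (\<beta>::real^'m) = (\<beta> v* E) \<bullet> u"
  by (metis dot_lmul_matrix inner_commute)

theorem lemma4:
  fixes Iz :: "'nx::finite set"
    and A :: "real ^ 'nx ^ 'p::finite" and b :: "real ^ 'p"
    and F :: "real ^ 'nx \<Rightarrow> real ^ 'nu::finite ^ 'k::finite" and h :: "real ^ 'k" and G :: "real ^ 'nx ^ 'k"
    and B1 :: "real ^ 'nx ^ 'm" and B2 :: "real ^ 'ny::finite ^ 'm::finite" and E :: "real ^ 'nu ^ 'm"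
    and d :: "real ^ 'm" and c1 :: "real ^ 'nx" and c2 :: "real ^ 'ny"
    and x :: "real ^ 'nx"
  assumes A1: "\<forall>x'\<in>Xset Iz A b. Uset F h G x' \<noteq> {}"
    and A2: "\<forall>x'\<in>Xset Iz A b. bounded (Uset F h G x')"
    and A3: "\<bar>INF (x', u, y) \<in> {(x', u, y). x' \<in> Xset Iz A b \<and> u \<in> Uset F h G x'
                                  \<and> y \<in> Yset B2 d B1 E x' u}.
               ereal (c1 \<bullet> x' + c2 \<bullet> y)\<bar> \<noteq> \<infinity>"
    and hx: "x \<in> Xset Iz A b"
  shows "(\<exists>u\<in>Uset F h G x. Qval c2 B2 d B1 E x u
              = (SUP u'\<in>Uset F h G x. Qval c2 B2 d B1 E x u'))
       \<and> (\<exists>u\<in>(\<Union>\<pi>\<in>extreme_points (PiSet B2 c2). OU F h G E x \<pi>)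
                \<union> (\<Union>\<gamma>\<in>extreme_rays B2. OU F h G E x \<gamma>).
            Qval c2 B2 d B1 E x u
              = (SUP u'\<in>(\<Union>\<pi>\<in>extreme_points (PiSet B2 c2). OU F h G E x \<pi>)
                         \<union> (\<Union>\<gamma>\<in>extreme_rays B2. OU F h G E x \<gamma>).
                   Qval c2 B2 d B1 E x u'))
       \<and> (SUP u\<in>Uset F h G x. Qval c2 B2 d B1 E x u)
         = (SUP u\<in>(\<Union>\<pi>\<in>extreme_points (PiSet B2 c2). OU F h G E x \<pi>)
                  \<union> (\<Union>\<gamma>\<in>extreme_rays B2. OU F h G E x \<gamma>).
              Qval c2 B2 d B1 E x u)"
proof -
  define U where "U = Uset F h G x"
  define T where "T = (\<Union>\<pi>\<in>extreme_points (PiSet B2 c2). OU F h G E x \<pi>)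
                \<union> (\<Union>\<gamma>\<in>extreme_rays B2. OU F h G E x \<gamma>)"
  define Q where "Q = Qval c2 B2 d B1 E x"
  define wv where "wv = (\<lambda>u. d - B1 *v x - E *v u)"
  have Qeq: "Q u = (INF y\<in>{y. nonneg y \<and> vle (wv u) (B2 *v y)}. ereal (c2 \<bullet> y))" for u
    by (simp add: Q_def Qval_def Yset_def wv_def)
  have ident: "\<beta> \<bullet> wv u = \<beta> \<bullet> (d - B1 *v x) + (- (E *v u)) \<bullet> \<beta>" for \<beta> u
    by (simp add: wv_def inner_diff_right inner_commute)
  have TU: "T \<subseteq> U" by (auto simp: T_def U_def OU_def)
  have Pne: "PiSet B2 c2 \<noteq> {}"
  proof
    assume Pe: "PiSet B2 c2 = {}"
    have nf: "\<not> (\<exists>\<pi>. nonneg \<pi> \<and> vle (transpose B2 *v \<pi>) c2 \<and> (0::real^'m) \<bullet> \<pi> \<le> 0)"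
      using Pe by (auto simp: PiSet_def)
    obtain z t where zt: "nonneg z" "0 \<le> t"
      "\<forall>j. 0 \<le> (transpose (transpose B2) *v z) $ j + t * (0::real^'m) $ j"
      "z \<bullet> c2 + t * 0 < 0"
      using farkas_row[OF nf] by blast
    have Bz0: "0 \<le> (B2 *v z) $ j" for j using zt(3) by (simp add: transpose_transpose)
    have zc: "z \<bullet> c2 < 0" using zt(4) by simp
    define S where "S = {(x', u, y). x' \<in> Xset Iz A b \<and> u \<in> Uset F h G x' \<and> y \<in> Yset B2 d B1 E x' u}"
    define I where "I = (INF (x', u, y) \<in> S. ereal (c1 \<bullet> x' + c2 \<bullet> y))"
    have A3': "\<bar>I\<bar> \<noteq> \<infinity>" using A3 by (simp add: I_def S_def)
    have "S \<noteq> {}"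
    proof
      assume "S = {}" then have "I = \<infinity>" by (simp add: I_def top_ereal_def)
      with A3' show False by simp
    qed
    then obtain x' u' y' where tr: "(x', u', y') \<in> S" by auto
    have "I \<le> ereal B" for B
    proof -
      define s where "s = max 0 ((c1 \<bullet> x' + c2 \<bullet> y' - B) / (- (z \<bullet> c2)))"
      have s0: "0 \<le> s" by (simp add: s_def)
      have "(x', u', y' + s *\<^sub>R z) \<in> S"
      proof -
        have y'Y: "nonneg y'" "vle (d - B1 *v x' - E *v u') (B2 *v y')" using tr by (auto simp: S_def Yset_def)
        have "nonneg (y' + s *\<^sub>R z)" using y'Y(1) zt(1) s0 by (auto simp: nonneg_def)
        moreover have "vle (d - B1 *v x' - E *v u') (B2 *v (y' + s *\<^sub>R z))"
          unfolding vle_def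
        proof
          fix j
          have "(d - B1 *v x' - E *v u') $ j \<le> (B2 *v y') $ j" using y'Y(2) by (simp add: vle_def)
          also have "\<dots> \<le> (B2 *v y') $ j + s * (B2 *v z) $ j" using s0 Bz0[of j] by simp
          finally show "(d - B1 *v x' - E *v u') $ j \<le> (B2 *v (y' + s *\<^sub>R z)) $ j"
            by (simp add: matrix_vector_right_distrib matrix_vector_mult_scaleR)
        qed
        ultimately show ?thesis using tr by (auto simp: S_def Yset_def)
      qed
      then have "I \<le> ereal (c1 \<bullet> x' + c2 \<bullet> (y' + s *\<^sub>R z))"
        unfolding I_def by (rule INF_lower2) simp
      also have "c1 \<bullet> x' + c2 \<bullet> (y' + s *\<^sub>R z) = c1 \<bullet> x' + c2 \<bullet> y' + s * (z \<bullet> c2)"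
        by (simp add: inner_add_right inner_commute)
      also have "\<dots> \<le> B"
      proof -
        have "(c1 \<bullet> x' + c2 \<bullet> y' - B) / (- (z \<bullet> c2)) \<le> s" by (simp add: s_def)
        then have "c1 \<bullet> x' + c2 \<bullet> y' - B \<le> s * (- (z \<bullet> c2))" using zc by (simp add: field_simps)
        then show ?thesis by (simp add: algebra_simps)
      qed
      finally show ?thesis by simp
    qed
    then have "I = - \<infinity>" by (rule ereal_bot)
    with A3' show False by simp
  qed
  then obtain \<pi>0 where pi0: "\<pi>0 \<in> PiSet B2 c2" by blast
  have Une: "U \<noteq> {}" using A1 hx by (simp add: U_def)
  have clU: "closed U" unfolding U_def Uset_def
  proof -
    have "{u. nonneg u \<and> vle (F x *v u) (h + G *v x)} = {u. nonneg u} \<inter> {u. vle (F x *v u) (h + G *v x)}"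
      by auto
    moreover have "closed {u::real^'nu. nonneg u}"
      unfolding nonneg_def by (rule closed_positive_orthant)
    moreover have "closed {u. vle (F x *v u) (h + G *v x)}"
      unfolding vle_def matrix_vector_mul_component
      by (intro closed_Collect_all closed_halfspace_le)
    ultimately show "closed {u. nonneg u \<and> vle (F x *v u) (h + G *v x)}" by (metis closed_Int)
  qed
  have cU: "compact U" using clU A2 hx by (simp add: U_def compact_eq_bounded_closed)
  have OUne: "\<exists>u. u \<in> OU F h G E x \<beta>" for \<beta>
  proof -
    obtain u where "u \<in> U" "\<forall>v\<in>U. - ((\<beta> v* E) \<bullet> v) \<le> - ((\<beta> v* E) \<bullet> u)"
      using continuous_attains_sup[OF cU Une continuous_on_minus[OF continuous_on_inner[OF continuous_on_const continuous_on_id]], of "\<beta> v* E"]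
      by blast
    then have "u \<in> OU F h G E x \<beta>" by (simp add: OU_def U_def Ev_inner)
    then show ?thesis by blast
  qed
  have OUmax: "\<beta> \<bullet> wv v \<le> \<beta> \<bullet> wv u" if "u \<in> OU F h G E x \<beta>" "v \<in> U" for u v \<beta>
    using that by (simp add: OU_def U_def ident)
  have lowQ: "ereal (\<pi> \<bullet> wv u) \<le> Q u" if "\<pi> \<in> PiSet B2 c2" for \<pi> u
    unfolding Qeq by (rule INF_greatest) (use weak_duality that in auto)
  have core: "\<exists>us\<in>T. \<forall>v\<in>U. Q v \<le> Q us"
  proof (cases "\<exists>\<gamma>\<in>extreme_rays B2. \<exists>v\<in>U. 0 < \<gamma> \<bullet> wv v")
    case True
    then obtain \<gamma> v where g: "\<gamma> \<in> extreme_rays B2" "v \<in> U" "0 < \<gamma> \<bullet> wv v" by blast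
    obtain u where u: "u \<in> OU F h G E x \<gamma>" using OUne by blast
    have uT: "u \<in> T" using u g(1) by (auto simp: T_def)
    have pos: "0 < \<gamma> \<bullet> wv u" using OUmax[OF u g(2)] g(3) by simp
    have grc: "\<gamma> \<in> recession_cone_Pi B2" using g(1) by (simp add: extreme_rays_def)
    have emp: "{y. nonneg y \<and> vle (wv u) (B2 *v y)} = {}"
      using ray_weak[OF grc] pos by force
    have "Q u = \<infinity>" unfolding Qeq emp by (simp add: top_ereal_def)
    then have "\<forall>v\<in>U. Q v \<le> Q u" by simp
    then show ?thesis using uT by blast
  next
    case False
    then have noray: "\<forall>\<gamma>\<in>extreme_rays B2. \<forall>v\<in>U. \<gamma> \<bullet> wv v \<le> 0" by (auto simp: not_less)
    have repr: "\<exists>p\<in>extreme_points (PiSet B2 c2). Q v = ereal (p \<bullet> wv v)" if v: "v \<in> U" for v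
    proof -
      have "\<exists>y. nonneg y \<and> vle (wv v) (B2 *v y)"
      proof (rule ccontr)
        assume "\<not> ?thesis"
        then obtain g where "g \<in> recession_cone_Pi B2" "0 < g \<bullet> wv v" using infeasible_ray by blast
        then obtain \<gamma> where "\<gamma> \<in> extreme_rays B2" "0 < \<gamma> \<bullet> wv v" using extreme_ray_exists by blast
        then show False using noray v by force
      qed
      then obtain y0 where "nonneg y0" "vle (wv v) (B2 *v y0)" by blast
      from strong_dual[OF pi0 this] show ?thesis unfolding Qeq extreme_points_def by blast
    qed
    define PP where "PP = extreme_points (PiSet B2 c2)"
    have finP: "finite PP" unfolding PP_def extreme_points_def
      by (rule finite_polyhedron_extreme_points[OF polyhedron_PiSet])
    obtain v0 where v0: "v0 \<in> U" using Une by blast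
    have PPne: "PP \<noteq> {}" using repr[OF v0] by (auto simp: PP_def)
    define uo where "uo = (\<lambda>p. SOME u. u \<in> OU F h G E x p)"
    have uo: "uo p \<in> OU F h G E x p" for p unfolding uo_def using OUne by (rule someI_ex)
    define \<phi> where "\<phi> = (\<lambda>p. p \<bullet> wv (uo p))"
    define Mx where "Mx = Max (\<phi> ` PP)"
    have "Mx \<in> \<phi> ` PP" unfolding Mx_def using finP PPne by (intro Max_in) auto
    then obtain p0 where p0: "p0 \<in> PP" "\<phi> p0 = Mx" by blast
    have phile: "\<phi> p \<le> Mx" if "p \<in> PP" for p unfolding Mx_def using finP that by (intro Max_ge) auto
    have p0Pi: "p0 \<in> PiSet B2 c2" using p0(1)
      by (auto simp: PP_def extreme_points_def extreme_point_of_def)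
    have usT: "uo p0 \<in> T" using uo[of p0] p0(1) by (auto simp: T_def PP_def)
    have "Q v \<le> Q (uo p0)" if v: "v \<in> U" for v
    proof -
      obtain p where p: "p \<in> PP" "Q v = ereal (p \<bullet> wv v)" using repr[OF v] by (auto simp: PP_def)
      have "p \<bullet> wv v \<le> \<phi> p" unfolding \<phi>_def by (rule OUmax[OF uo v])
      also have "\<dots> \<le> \<phi> p0" using phile[OF p(1)] p0 by simp
      finally have "Q v \<le> ereal (p0 \<bullet> wv (uo p0))" using p(2) by (simp add: \<phi>_def)
      also have "\<dots> \<le> Q (uo p0)" by (rule lowQ[OF p0Pi])
      finally show ?thesis .
    qed
    then show ?thesis using usT by blast
  qed
  then obtain us where us: "us \<in> T" "\<forall>v\<in>U. Q v \<le> Q us" by blast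
  have usU: "us \<in> U" using us(1) TU by blast
  have s1: "(SUP u\<in>U. Q u) = Q us"
    by (rule antisym) (use us usU in \<open>auto intro: SUP_least SUP_upper\<close>)
  have s2: "(SUP u\<in>T. Q u) = Q us"
    by (rule antisym) (use us TU usU in \<open>auto intro: SUP_least SUP_upper\<close>)
  show ?thesis
    unfolding U_def[symmetric] T_def[symmetric] Q_def[symmetric]
    using s1 s2 us(1) usU by metis
qed


end
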